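(* Under the setting of the Jacobian formula ($\beta\in(0,1)$, $p\in(1,2]$, $\zeta>0$), the map $x\mapsto J(x)=-TB^\dagger K(x)B$ is Lipschitz continuous on $\mathbb{R}^n$ with respect to the Euclidean norm and the induced operator 2-norm: there exists $\xi\ge0$ with $\lVert J(x)-J(y)\rVert_2\le\xi\lVert x-y\rVert_2$ for all $x,y\in\mathbb{R}^n$.
   Context: $T=\beta D+D^{-1}L$ with $D$ the weighted degree matrix and $L=D-A$ the Laplacian of a simple connected weighted graph with $n$ vertices and $m\ge1$ edges; $B$ the incidence matrix, $B^\dagger$ its Moore–Penrose inverse; with $z=Bx$, $K(x)=\operatorname{diag}\big((z_i^2+\zeta)^{\frac12(p-2)}+(p-2)z_i^2(z_i^2+\zeta)^{\frac12(p-4)}\big)_{i=1}^m$. *)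

theory Defs
  imports "HOL-Analysis.Analysis"
begin

text \<open>Graph data: vertices are the elements of a finite type 'n, edges the elements
  of a finite type 'm. Edge e joins src e and tgt e (an arbitrary fixed orientation)
  and carries weight w e.\<close>

definition simple_connected_weighted_graph ::
  "('m::finite \<Rightarrow> 'n::finite) \<Rightarrow> ('m \<Rightarrow> 'n) \<Rightarrow> ('m \<Rightarrow> real) \<Rightarrow> bool" where
  "simple_connected_weighted_graph src tgt w \<longleftrightarrow>
     (\<forall>e. src e \<noteq> tgt e) \<and>
     inj (\<lambda>e. {src e, tgt e}) \<and>
     (\<forall>e. w e > 0) \<and>
     (\<forall>i j. (i, j) \<in> ({(src e, tgt e) | e. True} \<union> {(tgt e, src e) | e. True})\<^sup>*)"

text \<open>Weighted adjacency matrix A.\<close>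
definition adj_mat :: "('m::finite \<Rightarrow> 'n::finite) \<Rightarrow> ('m \<Rightarrow> 'n) \<Rightarrow> ('m \<Rightarrow> real) \<Rightarrow> real^'n^'n" where
  "adj_mat src tgt w = (\<chi> i j. \<Sum>e\<in>{e. {src e, tgt e} = {i, j}}. w e)"

text \<open>Weighted degree matrix D.\<close>
definition deg_mat :: "('m::finite \<Rightarrow> 'n::finite) \<Rightarrow> ('m \<Rightarrow> 'n) \<Rightarrow> ('m \<Rightarrow> real) \<Rightarrow> real^'n^'n" where
  "deg_mat src tgt w = (\<chi> i j. if i = j then (\<Sum>k\<in>UNIV. adj_mat src tgt w $ i $ k) else 0)"

text \<open>Laplacian L = D - A.\<close>
definition lap_mat :: "('m::finite \<Rightarrow> 'n::finite) \<Rightarrow> ('m \<Rightarrow> 'n) \<Rightarrow> ('m \<Rightarrow> real) \<Rightarrow> real^'n^'n" where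
  "lap_mat src tgt w = deg_mat src tgt w - adj_mat src tgt w"

text \<open>Oriented (unweighted) incidence matrix B (m x n): row e has +1 at src e, -1 at tgt e.\<close>
definition inc_mat :: "('m::finite \<Rightarrow> 'n::finite) \<Rightarrow> ('m \<Rightarrow> 'n) \<Rightarrow> real^'n^'m" where
  "inc_mat src tgt = (\<chi> e i. if i = src e then 1 else if i = tgt e then -1 else 0)"

text \<open>Moore--Penrose inverse, defined by the four Penrose conditions.\<close>
definition mp_pinv :: "real^'b::finite^'a::finite \<Rightarrow> real^'a^'b" where
  "mp_pinv A = (THE X. A ** X ** A = A \<and> X ** A ** X = X \<and>
       transpose (A ** X) = A ** X \<and> transpose (X ** A) = X ** A)"

text \<open>T = beta D + D^{-1} L.\<close>
definition T_mat :: "real \<Rightarrow> ('m::finite \<Rightarrow> 'n::finite) \<Rightarrow> ('m \<Rightarrow> 'n) \<Rightarrow> ('m \<Rightarrow> real) \<Rightarrow> real^'n^'n" where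
  "T_mat \<beta> src tgt w = \<beta> *\<^sub>R deg_mat src tgt w + matrix_inv (deg_mat src tgt w) ** lap_mat src tgt w"

text \<open>K(x) = diag((z_i^2+zeta)^((p-2)/2) + (p-2) z_i^2 (z_i^2+zeta)^((p-4)/2)), z = Bx.\<close>
definition K_mat :: "real \<Rightarrow> real \<Rightarrow> ('m::finite \<Rightarrow> 'n::finite) \<Rightarrow> ('m \<Rightarrow> 'n) \<Rightarrow> real^'n \<Rightarrow> real^'m^'m" where
  "K_mat p \<zeta> src tgt x = (let z = inc_mat src tgt *v x in
     (\<chi> i j. if i = j then (z$i ^ 2 + \<zeta>) powr ((p - 2) / 2)
                         + (p - 2) * z$i ^ 2 * (z$i ^ 2 + \<zeta>) powr ((p - 4) / 2)
             else 0))"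

text \<open>Jacobian J(x) = - T B^dagger K(x) B.\<close>
definition J_mat :: "real \<Rightarrow> real \<Rightarrow> real \<Rightarrow> ('m::finite \<Rightarrow> 'n::finite) \<Rightarrow> ('m \<Rightarrow> 'n) \<Rightarrow> ('m \<Rightarrow> real)
     \<Rightarrow> real^'n \<Rightarrow> real^'n^'n" where
  "J_mat \<beta> p \<zeta> src tgt w x =
     - (T_mat \<beta> src tgt w ** mp_pinv (inc_mat src tgt) ** K_mat p \<zeta> src tgt x ** inc_mat src tgt)"

end

theory Submission
  imports Defs
begin

definition kf :: "real \<Rightarrow> real \<Rightarrow> real \<Rightarrow> real" where
  "kf p \<zeta> t = (t ^ 2 + \<zeta>) powr ((p - 2) / 2) + (p - 2) * t ^ 2 * (t ^ 2 + \<zeta>) powr ((p - 4) / 2)"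

lemma alg1:
  fixes S P a c t :: real assumes "S > 0"
  shows "a * (P / S) * (2 * t) + c * ((2*t) * (P/S) + t^2 * ((a-1) * (P/S^2) * (2*t)))
     = P * (2*a*t/S + 2*c*t/S + 2*c*(a-1)*t^3/S^2)"
  using assms by (simp add: field_simps power2_eq_square power3_eq_cube)

lemma kf_deriv:
  assumes "0 < \<zeta>"
  shows "(kf p \<zeta> has_real_derivative
     (let s = t^2 + \<zeta>; a = (p-2)/2 in
      s powr a * (2*a*t/s + 2*(p-2)*t/s + 2*(p-2)*(a-1)*t^3/s^2))) (at t)"
proof -
  let ?s = "t^2 + \<zeta>" let ?a = "(p-2)/2"
  have s: "?s > 0" using assms by (simp add: add_nonneg_pos)
  have e: "(p-4)/2 = ?a - 1" by (simp add: field_simps)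
  have D: "((\<lambda>t. (t ^ 2 + \<zeta>) powr ?a + (p - 2) * t ^ 2 * (t ^ 2 + \<zeta>) powr (?a - 1)) has_real_derivative
     ?a * ?s powr (?a - 1) * (2 * t) + (p-2) * ((2*t) * ?s powr (?a-1) + t^2 * ((?a-1) * ?s powr (?a - 1 - 1) * (2*t)))) (at t)"
    using s apply (auto intro!: derivative_eq_intros)
    by (simp add: algebra_simps)
  have f1: "?s powr (?a - 1) = ?s powr ?a / ?s" and f2: "?s powr (?a - 1 - 1) = ?s powr ?a / ?s^2"
    using s by (simp_all add: powr_diff power2_eq_square del: diff_diff_eq)
  have E: "?a * ?s powr (?a - 1) * (2 * t) + (p-2) * ((2*t) * ?s powr (?a-1) + t^2 * ((?a-1) * ?s powr (?a - 1 - 1) * (2*t)))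
     = ?s powr ?a * (2*?a*t/?s + 2*(p-2)*t/?s + 2*(p-2)*(?a-1)*t^3/?s^2)"
    unfolding f1 f2 using s by (rule alg1)
  show ?thesis using D unfolding E kf_def e Let_def .
qed

lemma t_over_s:
  fixes t z :: real assumes z: "z > 0"
  shows "\<bar>t\<bar> / (t^2 + z) \<le> max 1 (1/z)"
proof -
  have pos: "t^2 + z > 0" using z by (simp add: add_nonneg_pos)
  show ?thesis
  proof (cases "\<bar>t\<bar> \<le> 1")
    case True
    have "\<bar>t\<bar> / (t^2 + z) \<le> \<bar>t\<bar> / z"
      by (rule divide_left_mono) (use z pos in auto)
    also have "\<dots> \<le> 1 / z" by (rule divide_right_mono) (use True z in auto)
    finally show ?thesis by linarith
  next
    case False
    have "\<bar>t\<bar> * 1 \<le> \<bar>t\<bar> * \<bar>t\<bar>" using False by (intro mult_left_mono) auto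
    then have "\<bar>t\<bar> \<le> t^2" by (simp add: power2_eq_square abs_mult_self_eq)
    then have "\<bar>t\<bar> \<le> t^2 + z" using z by linarith
    then have "\<bar>t\<bar> / (t^2 + z) \<le> 1" using pos by (simp add: pos_divide_le_eq)
    then show ?thesis by linarith
  qed
qed

lemma kf_deriv_bound:
  fixes p \<zeta> t :: real
  assumes "0 < \<zeta>" "p \<le> 2"
  shows "\<bar>(let s = t^2 + \<zeta>; a = (p-2)/2 in
      s powr a * (2*a*t/s + 2*(p-2)*t/s + 2*(p-2)*(a-1)*t^3/s^2))\<bar>
     \<le> \<zeta> powr ((p-2)/2) * (2*\<bar>(p-2)/2\<bar> + 2*\<bar>p-2\<bar> + 2*\<bar>p-2\<bar>*\<bar>(p-2)/2-1\<bar>) * max 1 (1/\<zeta>)"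
proof -
  define s where "s = t^2 + \<zeta>"
  define a where "a = (p-2)/2"
  define m where "m = max 1 (1/\<zeta>)"
  have s: "s > 0" "\<zeta> \<le> s" "t^2 \<le> s" using assms by (auto simp: s_def add_nonneg_pos)
  have q: "\<bar>t\<bar>/s \<le> m" unfolding s_def m_def using t_over_s assms(1) by blast
  have q3: "\<bar>t^3/s^2\<bar> \<le> m"
  proof -
    have "\<bar>t^3/s^2\<bar> = (t^2/s) * (\<bar>t\<bar>/s)" using s
      by (simp add: abs_mult power3_eq_cube power2_eq_square abs_divide field_simps)
    also have "\<dots> \<le> 1 * m" using s q
      by (intro mult_mono) (auto simp: field_simps)
    finally show ?thesis by simp
  qed
  have P: "0 \<le> s powr a" "s powr a \<le> \<zeta> powr a"
    using s assms by (auto simp: a_def intro!: powr_mono2')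
  have "\<bar>2*a*t/s + 2*(p-2)*t/s + 2*(p-2)*(a-1)*t^3/s^2\<bar>
     \<le> \<bar>2*a\<bar>*(\<bar>t\<bar>/s) + \<bar>2*(p-2)\<bar>*(\<bar>t\<bar>/s) + \<bar>2*(p-2)*(a-1)\<bar>*\<bar>t^3/s^2\<bar>"
  proof -
    have e1: "\<bar>2*a*t/s\<bar> = \<bar>2*a\<bar>*(\<bar>t\<bar>/s)" "\<bar>2*(p-2)*t/s\<bar> = \<bar>2*(p-2)\<bar>*(\<bar>t\<bar>/s)"
      "\<bar>2*(p-2)*(a-1)*t^3/s^2\<bar> = \<bar>2*(p-2)*(a-1)\<bar>*\<bar>t^3/s^2\<bar>"
      using s by (simp_all add: abs_mult abs_divide)
    have "\<bar>2*a*t/s + 2*(p-2)*t/s + 2*(p-2)*(a-1)*t^3/s^2\<bar> \<le> \<bar>2*a*t/s\<bar> + \<bar>2*(p-2)*t/s\<bar> + \<bar>2*(p-2)*(a-1)*t^3/s^2\<bar>"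
      by (rule order_trans[OF abs_triangle_ineq add_right_mono[OF abs_triangle_ineq]])
    then show ?thesis unfolding e1 .
  qed
  also have "\<dots> \<le> \<bar>2*a\<bar>*m + \<bar>2*(p-2)\<bar>*m + \<bar>2*(p-2)*(a-1)\<bar>*m"
    using q q3 by (intro add_mono mult_left_mono) auto
  also have "\<dots> = (2*\<bar>a\<bar> + 2*\<bar>p-2\<bar> + 2*\<bar>p-2\<bar>*\<bar>a-1\<bar>) * m"
    by (simp only: abs_mult abs_numeral distrib_right)
  finally have B: "\<bar>2*a*t/s + 2*(p-2)*t/s + 2*(p-2)*(a-1)*t^3/s^2\<bar>
     \<le> (2*\<bar>a\<bar> + 2*\<bar>p-2\<bar> + 2*\<bar>p-2\<bar>*\<bar>a-1\<bar>) * m" .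
  have "\<bar>s powr a * (2*a*t/s + 2*(p-2)*t/s + 2*(p-2)*(a-1)*t^3/s^2)\<bar>
     \<le> \<zeta> powr a * ((2*\<bar>a\<bar> + 2*\<bar>p-2\<bar> + 2*\<bar>p-2\<bar>*\<bar>a-1\<bar>) * m)"
    unfolding abs_mult using P B by (intro mult_mono) auto
  then show ?thesis unfolding Let_def s_def[symmetric] a_def[symmetric] m_def[symmetric]
    by (simp add: mult.assoc)
qed

definition kfd :: "real \<Rightarrow> real \<Rightarrow> real \<Rightarrow> real" where
  "kfd p \<zeta> t = (let s = t^2 + \<zeta>; a = (p-2)/2 in
      s powr a * (2*a*t/s + 2*(p-2)*t/s + 2*(p-2)*(a-1)*t^3/s^2))"

lemma kf_lipschitz:
  assumes "0 < \<zeta>" "p \<le> 2"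
  shows "\<exists>L\<ge>0. \<forall>u v. \<bar>kf p \<zeta> u - kf p \<zeta> v\<bar> \<le> L * \<bar>u - v\<bar>"
proof -
  define L where "L = \<zeta> powr ((p-2)/2) * (2*\<bar>(p-2)/2\<bar> + 2*\<bar>p-2\<bar> + 2*\<bar>p-2\<bar>*\<bar>(p-2)/2-1\<bar>) * max 1 (1/\<zeta>)"
  have L0: "L \<ge> 0" unfolding L_def by simp
  have der: "(kf p \<zeta> has_real_derivative kfd p \<zeta> t) (at t)" for t
    unfolding kfd_def by (rule kf_deriv[OF assms(1)])
  have bd: "\<bar>kfd p \<zeta> t\<bar> \<le> L" for t
    unfolding kfd_def L_def by (rule kf_deriv_bound[OF assms])
  have key: "\<bar>kf p \<zeta> v - kf p \<zeta> u\<bar> \<le> L * \<bar>v - u\<bar>" if uv: "u < v" for u v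
  proof -
    have "\<exists>z. u < z \<and> z < v \<and> kf p \<zeta> v - kf p \<zeta> u = (v - u) * kfd p \<zeta> z"
      by (rule MVT2[OF uv]) (rule der)
    then obtain z where eq: "kf p \<zeta> v - kf p \<zeta> u = (v - u) * kfd p \<zeta> z" by blast
    have "\<bar>kf p \<zeta> v - kf p \<zeta> u\<bar> = \<bar>v - u\<bar> * \<bar>kfd p \<zeta> z\<bar>" unfolding eq abs_mult ..
    also have "\<dots> \<le> \<bar>v - u\<bar> * L" by (rule mult_left_mono[OF bd]) simp
    finally show ?thesis by (simp only: mult.commute)
  qed
  have "\<bar>kf p \<zeta> u - kf p \<zeta> v\<bar> \<le> L * \<bar>u - v\<bar>" for u v
  proof (cases u v rule: linorder_cases)
    case less then show ?thesis using key[of u v] by (simp add: abs_minus_commute)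
  next
    case equal then show ?thesis using L0 by simp
  next
    case greater then show ?thesis using key[of v u] by simp
  qed
  with L0 show ?thesis by blast
qed

lemma K_eq: "K_mat p \<zeta> src tgt x = (\<chi> i j. if i = j then kf p \<zeta> ((inc_mat src tgt *v x) $ i) else 0)"
  unfolding K_mat_def kf_def Let_def by simp

lemma diag_entry:
  fixes M :: "real^'m::finite^'n::finite" and B :: "real^'n^'m"
  shows "((M ** (\<chi> i j. if i = j then d i else 0)) ** B) $ i $ j = (\<Sum>k\<in>UNIV. M$i$k * d k * B$k$j)"
  by (simp add: matrix_matrix_mult_def if_distrib[where f="\<lambda>x. _ * x"] cong: if_cong)

lemma inc_entry: "\<bar>inc_mat src tgt $ k $ j\<bar> \<le> 1"
  unfolding inc_mat_def by simp

theorem mainTheorem11: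
  fixes src tgt :: "'m::finite \<Rightarrow> 'n::finite" and w :: "'m \<Rightarrow> real"
    and \<beta> p \<zeta> :: real
  assumes "simple_connected_weighted_graph src tgt w"
    and "0 < \<beta>" "\<beta> < 1" and "1 < p" "p \<le> 2" and "0 < \<zeta>"
  shows "\<exists>\<xi>\<ge>0. \<forall>x y :: real^'n.
           onorm (\<lambda>v. (J_mat \<beta> p \<zeta> src tgt w x - J_mat \<beta> p \<zeta> src tgt w y) *v v)
             \<le> \<xi> * norm (x - y)"
proof -
  obtain L where L0: "L \<ge> 0" and L: "\<And>u v. \<bar>kf p \<zeta> u - kf p \<zeta> v\<bar> \<le> L * \<bar>u - v\<bar>"
    using kf_lipschitz[OF assms(6,5)] by blast
  define B where "B = inc_mat src tgt"
  define M where "M = T_mat \<beta> src tgt w ** mp_pinv B"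
  define mM where "mM = (\<Sum>i\<in>UNIV. \<Sum>k\<in>UNIV. \<bar>M$i$k\<bar>)"
  define nB where "nB = onorm ((*v) B)"
  have mM: "\<bar>M$i$k\<bar> \<le> mM" for i k
  proof -
    have "\<bar>M$i$k\<bar> \<le> (\<Sum>k\<in>UNIV. \<bar>M$i$k\<bar>)" by (rule member_le_sum) auto
    also have "\<dots> \<le> mM" unfolding mM_def by (rule member_le_sum) (auto intro: sum_nonneg)
    finally show ?thesis .
  qed
  have mM0: "mM \<ge> 0" unfolding mM_def by (auto intro: sum_nonneg)
  have nB0: "nB \<ge> 0" unfolding nB_def by (rule onorm_pos_le) (rule matrix_vector_mul_bounded_linear)
  have nB: "\<bar>(B *v x - B *v y) $ k\<bar> \<le> nB * norm (x - y)" for x y k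
  proof -
    have "\<bar>(B *v x - B *v y) $ k\<bar> = \<bar>(B *v (x - y)) $ k\<bar>" by (simp add: matrix_vector_mult_diff_distrib)
    also have "\<dots> \<le> norm (B *v (x - y))" by (rule component_le_norm_cart)
    also have "\<dots> \<le> nB * norm (x - y)" unfolding nB_def
      by (rule onorm) (rule matrix_vector_mul_bounded_linear)
    finally show ?thesis .
  qed
  define C where "C = real CARD('m) * mM * L * nB"
  have J: "J_mat \<beta> p \<zeta> src tgt w x = - ((M ** (\<chi> i j. if i = j then kf p \<zeta> ((B *v x) $ i) else 0)) ** B)" for x
    unfolding J_mat_def M_def B_def K_eq ..
  have entry: "\<bar>(J_mat \<beta> p \<zeta> src tgt w x - J_mat \<beta> p \<zeta> src tgt w y) $ i $ j\<bar> \<le> C * norm (x - y)" for x y i j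
  proof -
    have "(J_mat \<beta> p \<zeta> src tgt w x - J_mat \<beta> p \<zeta> src tgt w y) $ i $ j
       = (\<Sum>k\<in>UNIV. M$i$k * (kf p \<zeta> ((B *v y) $ k) - kf p \<zeta> ((B *v x) $ k)) * B$k$j)"
    proof -
      have dx: "((M ** (\<chi> i j. if i = j then kf p \<zeta> ((B *v x) $ i) else 0)) ** B) $ i $ j
          = (\<Sum>k\<in>UNIV. M$i$k * kf p \<zeta> ((B *v x) $ k) * B$k$j)" for x
        by (rule diag_entry[where d="\<lambda>i. kf p \<zeta> ((B *v x) $ i)"])
      show ?thesis unfolding J by (simp add: dx sum_subtractf[symmetric] algebra_simps)
    qed
    also have "\<bar>\<dots>\<bar> \<le> (\<Sum>k\<in>UNIV. \<bar>M$i$k * (kf p \<zeta> ((B *v y) $ k) - kf p \<zeta> ((B *v x) $ k)) * B$k$j\<bar>)"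
      by (rule sum_abs)
    also have "\<dots> \<le> (\<Sum>k::'m\<in>UNIV. mM * (L * (nB * norm (x - y))) * 1)"
    proof (rule sum_mono)
      fix k
      have "\<bar>kf p \<zeta> ((B *v y) $ k) - kf p \<zeta> ((B *v x) $ k)\<bar> \<le> L * \<bar>(B *v y) $ k - (B *v x) $ k\<bar>"
        by (rule L)
      also have "\<dots> \<le> L * (nB * norm (x - y))"
        using nB[of x y k] L0 by (intro mult_left_mono) (auto simp: abs_minus_commute)
      finally have a: "\<bar>kf p \<zeta> ((B *v y) $ k) - kf p \<zeta> ((B *v x) $ k)\<bar> \<le> L * (nB * norm (x - y))" .
      show "\<bar>M$i$k * (kf p \<zeta> ((B *v y) $ k) - kf p \<zeta> ((B *v x) $ k)) * B$k$j\<bar> \<le> mM * (L * (nB * norm (x - y))) * 1"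
        unfolding abs_mult using mM[of i k] a inc_entry[of src tgt k j, folded B_def] mM0
        by (intro mult_mono) auto
    qed
    also have "\<dots> = C * norm (x - y)" unfolding C_def by simp
    finally show ?thesis .
  qed
  have C0: "C \<ge> 0" unfolding C_def using mM0 L0 nB0 by simp
  show ?thesis
  proof (intro exI[of _ "real CARD('n) * real CARD('n) * C"] conjI allI)
    show "0 \<le> real CARD('n) * real CARD('n) * C" using C0 by simp
    fix x y :: "real^'n"
    have "onorm ((*v) (J_mat \<beta> p \<zeta> src tgt w x - J_mat \<beta> p \<zeta> src tgt w y))
       \<le> real CARD('n) * real CARD('n) * (C * norm (x - y))"
      by (rule onorm_le_matrix_component) (rule entry)
    then show "onorm (\<lambda>v. (J_mat \<beta> p \<zeta> src tgt w x - J_mat \<beta> p \<zeta> src tgt w y) *v v)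
             \<le> real CARD('n) * real CARD('n) * C * norm (x - y)"
      by (simp add: mult.assoc)
  qed
qed

end
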